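(* Let $n\ge2$, $t>0$ and $\bm{N}=(t,0,\ldots,0,-t)\in\mathbb{R}^{n+1}$. Then the uniform average of the vertices of $\mathcal{F}_n(\bm{N})$ is the flow $\bm{f}$ given by \[ f_{0,n}=t\,2^{-(n-1)},\quad f_{0,k}=t\,2^{-k}\ (1\le k\le n-1),\quad f_{i,n}=t\,2^{-(n-i)}\ (1\le i\le n-1),\quad f_{i,k}=t\,2^{-(k-i+1)}\ (1\le i<k\le n-1). \] Equivalently, it is represented by $t$ times the $n\times n$ matrix $A=(a_{ij})_{0\le i,j\le n-1}$ with $a_{00}=2^{-(n-1)}$, $a_{0j}=2^{-(n-j)}$ for $j\ge1$, $a_{i0}=2^{-(n-i)}$ for $i\ge1$, $a_{ij}=2^{-(n-i-j+1)}$ for $i,j\ge1$, $i+j<n$, $a_{i,n-i}=\tfrac12$ for $1\le i\le n-1$, and $a_{ij}=0$ for $i+j>n$.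
   Context: $\mathcal{F}_n(\bm{N})$ is the polytope of $\bm{f}=(f_{ij})_{0\le i<j\le n}\in\mathbb{R}_{\ge0}^{\binom{n+1}{2}}$ with $\sum_{j>i} f_{ij}-\sum_{k<i} f_{ki}=N_i$ for every $i\in\{0,\ldots,n\}$. The matrix form of $\bm f$ is $(a_{ij})$ with $a_{ij}=f_{i,n-j}$ for $i+j\le n-1$, $a_{i,n-i}=\sum_{k<i}(N_k-f_{k,i})$ for $1\le i\le n-1$, zero otherwise. The uniform average of vertices is the arithmetic mean of the vertices. *)

theory Defs
  imports Complex_Main
begin

text \<open>A flow f = (f_ij) for 0 \<le> i < j \<le> n is encoded as a function
  nat \<Rightarrow> nat \<Rightarrow> real that vanishes outside the index set {(i,j). i < j \<and> j \<le> n}.\<close>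

definition flow_polytope :: "nat \<Rightarrow> (nat \<Rightarrow> real) \<Rightarrow> (nat \<Rightarrow> nat \<Rightarrow> real) set" where
  "flow_polytope n N = {f. (\<forall>i j. \<not> (i < j \<and> j \<le> n) \<longrightarrow> f i j = 0)
      \<and> (\<forall>i j. 0 \<le> f i j)
      \<and> (\<forall>i\<le>n. (\<Sum>j\<in>{i<..n}. f i j) - (\<Sum>k<i. f k i) = N i)}"

definition vertices :: "(nat \<Rightarrow> nat \<Rightarrow> real) set \<Rightarrow> (nat \<Rightarrow> nat \<Rightarrow> real) set" where
  "vertices P = {x \<in> P. \<not> (\<exists>a\<in>P. \<exists>b\<in>P. \<exists>u::real. 0 < u \<and> u < 1 \<and> a \<noteq> b \<and>
       x = (\<lambda>i j. u * a i j + (1 - u) * b i j))}"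

definition uniform_average :: "(nat \<Rightarrow> nat \<Rightarrow> real) set \<Rightarrow> (nat \<Rightarrow> nat \<Rightarrow> real)" where
  "uniform_average V = (\<lambda>i j. (\<Sum>v\<in>V. v i j) / real (card V))"

definition matrix_form :: "nat \<Rightarrow> (nat \<Rightarrow> real) \<Rightarrow> (nat \<Rightarrow> nat \<Rightarrow> real) \<Rightarrow> (nat \<Rightarrow> nat \<Rightarrow> real)" where
  "matrix_form n N f = (\<lambda>i j.
     if i < n \<and> j < n \<and> i + j \<le> n - 1 then f i (n - j)
     else if 1 \<le> i \<and> i \<le> n - 1 \<and> j = n - i then (\<Sum>k<i. N k - f k i)
     else 0)"

end

theory Submission imports Defs begin

definition cedge :: "nat set \<Rightarrow> nat \<Rightarrow> nat \<Rightarrow> bool" where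
  "cedge S i j \<longleftrightarrow> i \<in> S \<and> j \<in> S \<and> i < j \<and> (\<forall>k\<in>S. \<not> (i < k \<and> k < j))"

definition pflow :: "real \<Rightarrow> nat set \<Rightarrow> nat \<Rightarrow> nat \<Rightarrow> real" where
  "pflow t S i j = (if cedge S i j then t else 0)"

lemma cedge_uniq_out: "cedge S i j \<Longrightarrow> cedge S i j' \<Longrightarrow> j = j'"
  unfolding cedge_def by (metis linorder_neqE_nat)

lemma cedge_uniq_in: "cedge S i j \<Longrightarrow> cedge S i' j \<Longrightarrow> i = i'"
  unfolding cedge_def by (metis linorder_neqE_nat)

lemma cedge_succ:
  assumes "finite S" "i \<in> S" "s \<in> S" "i < s"
  shows "\<exists>j. cedge S i j"
proof -
  let ?A = "{k\<in>S. i < k}"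
  have fin: "finite ?A" using assms by auto
  have ne: "?A \<noteq> {}" using assms by auto
  define m where "m = Min ?A"
  have "m \<in> ?A" using Min_in[OF fin ne] m_def by simp
  moreover have "\<forall>k\<in>S. \<not> (i < k \<and> k < m)" using Min_le[OF fin] m_def by force
  ultimately show ?thesis using assms unfolding cedge_def by blast
qed

lemma cedge_pred:
  assumes "finite S" "i \<in> S" "s \<in> S" "s < i"
  shows "\<exists>j. cedge S j i"
proof -
  let ?A = "{k\<in>S. k < i}"
  have fin: "finite ?A" using assms by auto
  have ne: "?A \<noteq> {}" using assms by auto
  define m where "m = Max ?A"
  have "m \<in> ?A" using Max_in[OF fin ne] m_def by simp
  moreover have "\<forall>k\<in>S. \<not> (m < k \<and> k < i)" using Max_ge[OF fin] m_def by (metis (mono_tags, lifting) leD mem_Collect_eq)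
  ultimately show ?thesis using assms unfolding cedge_def by blast
qed

lemma sum_unique_if:
  assumes "finite A" "s \<in> A" "\<And>j. j \<in> A \<Longrightarrow> P j \<longleftrightarrow> j = s"
  shows "(\<Sum>j\<in>A. if P j then (c::real) else 0) = c"
proof -
  have "(\<Sum>j\<in>A. if P j then c else 0) = (\<Sum>j\<in>A. if j = s then c else 0)"
    by (rule sum.cong) (use assms in auto)
  also have "\<dots> = c" using assms by simp
  finally show ?thesis .
qed

lemma sum_none_if:
  assumes "\<And>j. j \<in> A \<Longrightarrow> \<not> P j"
  shows "(\<Sum>j\<in>A. if P j then (c::real) else 0) = 0"
  using assms by (intro sum.neutral) auto

lemma pflow_in:
  assumes N: "N = (\<lambda>i::nat. if i = 0 then t else if i = n then - t else 0)"
    and n: "n \<ge> 1" and t: "t \<ge> 0"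
    and S: "S \<subseteq> {..n}" "0 \<in> S" "n \<in> S"
  shows "pflow t S \<in> flow_polytope n N"
proof -
  have fin: "finite S" using S finite_subset by blast
  have out: "(\<Sum>j\<in>{i<..n}. pflow t S i j) = (if i \<in> S \<and> i < n then t else 0)" if "i \<le> n" for i
  proof (cases "i \<in> S \<and> i < n")
    case True
    then obtain s where s: "cedge S i s" using cedge_succ[OF fin, of i n] S by auto
    have "s \<in> {i<..n}" using s S unfolding cedge_def by auto
    then show ?thesis unfolding pflow_def using True
      by (subst sum_unique_if[where s=s]) (use s cedge_uniq_out in auto)
  next
    case False
    then show ?thesis unfolding pflow_def using S
      by (subst sum_none_if) (auto simp: cedge_def)
  qed
  have inn: "(\<Sum>k<i. pflow t S k i) = (if i \<in> S \<and> 0 < i then t else 0)" if "i \<le> n" for i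
  proof (cases "i \<in> S \<and> 0 < i")
    case True
    then obtain s where s: "cedge S s i" using cedge_pred[OF fin, of i 0] S by auto
    have "s \<in> {..<i}" using s S unfolding cedge_def by auto
    then show ?thesis unfolding pflow_def using True
      by (subst sum_unique_if[where s=s]) (use s cedge_uniq_in in auto)
  next
    case False
    then show ?thesis unfolding pflow_def using S
      by (subst sum_none_if) (auto simp: cedge_def)
  qed
  show ?thesis unfolding flow_polytope_def
  proof (intro CollectI conjI allI impI)
    fix i j assume "\<not> (i < j \<and> j \<le> n)"
    then show "pflow t S i j = 0" using S unfolding pflow_def cedge_def by auto
  next
    fix i j show "0 \<le> pflow t S i j" using t unfolding pflow_def by auto
  next
    fix i assume i: "i \<le> n"
    show "(\<Sum>j\<in>{i<..n}. pflow t S i j) - (\<Sum>k<i. pflow t S k i) = N i"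
      unfolding out[OF i] inn[OF i] N using S n i by auto
  qed
qed


lemma flow_uniq:
  assumes a: "a \<in> flow_polytope n N" and p: "p \<in> flow_polytope n N"
    and supp: "\<And>i j. p i j = 0 \<Longrightarrow> a i j = 0"
    and one: "\<And>i j j'. p i j \<noteq> 0 \<Longrightarrow> p i j' \<noteq> 0 \<Longrightarrow> j = j'"
  shows "a = p"
proof -
  have "\<forall>j. a i j = p i j" for i
  proof (induction i rule: less_induct)
    case (less i)
    show ?case
    proof (cases "i \<le> n")
      case False
      then show ?thesis using a p unfolding flow_polytope_def by auto
    next
      case True
      have ea: "(\<Sum>j\<in>{i<..n}. a i j) = N i + (\<Sum>k<i. a k i)"
        using a True unfolding flow_polytope_def by force
      have ep: "(\<Sum>j\<in>{i<..n}. p i j) = N i + (\<Sum>k<i. p k i)"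
        using p True unfolding flow_polytope_def by force
      have "(\<Sum>k<i. a k i) = (\<Sum>k<i. p k i)" using less by auto
      then have eq: "(\<Sum>j\<in>{i<..n}. a i j) = (\<Sum>j\<in>{i<..n}. p i j)" using ea ep by simp
      show ?thesis
      proof (cases "\<exists>j0. p i j0 \<noteq> 0")
        case False
        then show ?thesis using supp by auto
      next
        case True
        then obtain j0 where j0: "p i j0 \<noteq> 0" by blast
        have oth: "j \<noteq> j0 \<Longrightarrow> p i j = 0 \<and> a i j = 0" for j using one j0 supp by blast
        have jr: "j0 \<in> {i<..n}" using j0 p unfolding flow_polytope_def by force
        have "(\<Sum>j\<in>{i<..n}. a i j) = a i j0"
          by (subst sum.remove[OF _ jr]) (use oth in \<open>auto intro: sum.neutral\<close>)
        moreover have "(\<Sum>j\<in>{i<..n}. p i j) = p i j0"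
          by (subst sum.remove[OF _ jr]) (use oth in \<open>auto intro: sum.neutral\<close>)
        ultimately have "a i j0 = p i j0" using eq by simp
        then show ?thesis using oth by metis
      qed
    qed
  qed
  then show ?thesis by auto
qed


lemma pflow_vertex:
  assumes N: "N = (\<lambda>i::nat. if i = 0 then t else if i = n then - t else 0)"
    and n: "n \<ge> 1" and t: "t > 0"
    and S: "S \<subseteq> {..n}" "0 \<in> S" "n \<in> S"
  shows "pflow t S \<in> vertices (flow_polytope n N)"
proof -
  have pin: "pflow t S \<in> flow_polytope n N" using pflow_in[OF N n _ S] t by simp
  have one: "\<And>i j j'. pflow t S i j \<noteq> 0 \<Longrightarrow> pflow t S i j' \<noteq> 0 \<Longrightarrow> j = j'"
    unfolding pflow_def using cedge_uniq_out by (auto split: if_splits)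
  show ?thesis unfolding vertices_def
  proof (intro CollectI conjI pin notI)
    assume "\<exists>a\<in>flow_polytope n N. \<exists>b\<in>flow_polytope n N. \<exists>u::real. 0 < u \<and> u < 1 \<and> a \<noteq> b \<and>
       pflow t S = (\<lambda>i j. u * a i j + (1 - u) * b i j)"
    then obtain a b u where a: "a \<in> flow_polytope n N" and b: "b \<in> flow_polytope n N"
      and u: "0 < u" "u < 1" and ab: "a \<noteq> b" and eq: "pflow t S = (\<lambda>i j. u * a i j + (1 - u) * b i j)"
      by blast
    have an: "a i j \<ge> 0" "b i j \<ge> 0" for i j using a b unfolding flow_polytope_def by auto
    have z: "pflow t S i j = 0 \<Longrightarrow> a i j = 0 \<and> b i j = 0" for i j
    proof -
      assume "pflow t S i j = 0"
      then have h: "u * a i j + (1 - u) * b i j = 0" using eq by metis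
      have "u * a i j \<ge> 0" "(1-u) * b i j \<ge> 0" using an u by auto
      then have "u * a i j = 0" "(1-u) * b i j = 0" using h by linarith+
      then show ?thesis using u by auto
    qed
    have "a = pflow t S" by (rule flow_uniq[OF a pin]) (use z one in auto)
    moreover have "b = pflow t S" by (rule flow_uniq[OF b pin]) (use z one in auto)
    ultimately show False using ab by simp
  qed
qed

lemma path_exists:
  assumes N: "N = (\<lambda>i::nat. if i = 0 then t else if i = n then - t else 0)"
    and n: "n \<ge> 1" and t: "t > 0" and f: "f \<in> flow_polytope n N"
  shows "\<exists>S. S \<subseteq> {..n} \<and> 0 \<in> S \<and> n \<in> S \<and> (\<forall>a b. cedge S a b \<longrightarrow> f a b > 0)"
proof -
  have fnn: "\<And>i j. f i j \<ge> 0" using f unfolding flow_polytope_def by auto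
  have cons: "\<And>i. i \<le> n \<Longrightarrow> (\<Sum>j\<in>{i<..n}. f i j) = N i + (\<Sum>k<i. f k i)"
    using f unfolding flow_polytope_def by force
  have main: "\<forall>i. n - i = d \<longrightarrow> i \<le> n \<longrightarrow> (i = 0 \<or> (\<Sum>k<i. f k i) > 0) \<longrightarrow>
     (\<exists>S. S \<subseteq> {i..n} \<and> i \<in> S \<and> n \<in> S \<and> (\<forall>a b. cedge S a b \<longrightarrow> f a b > 0))" for d
  proof (induction d rule: less_induct)
    case (less d)
    show ?case
    proof (intro allI impI)
      fix i assume d: "n - i = d" and i: "i \<le> n" and pos: "i = 0 \<or> (\<Sum>k<i. f k i) > 0"
      show "\<exists>S. S \<subseteq> {i..n} \<and> i \<in> S \<and> n \<in> S \<and> (\<forall>a b. cedge S a b \<longrightarrow> f a b > 0)"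
      proof (cases "i = n")
        case True
        then show ?thesis by (intro exI[of _ "{n}"]) (auto simp: cedge_def)
      next
        case False
        have "N i + (\<Sum>k<i. f k i) > 0" using pos N t False n by auto
        then have "(\<Sum>j\<in>{i<..n}. f i j) > 0" using cons[OF i] by simp
        then have "\<exists>j\<in>{i<..n}. f i j > 0"
        proof (rule contrapos_pp)
          assume "\<not> (\<exists>j\<in>{i<..n}. f i j > 0)"
          then have "(\<Sum>j\<in>{i<..n}. f i j) \<le> 0" by (intro sum_nonpos) (auto simp: not_less)
          then show "\<not> (\<Sum>j\<in>{i<..n}. f i j) > 0" by simp
        qed
        then obtain j where j: "j \<in> {i<..n}" "f i j > 0" by blast
        have "f i j \<le> (\<Sum>k<j. f k j)"
          by (rule member_le_sum[where f="\<lambda>k. f k j"]) (use j fnn in auto)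
        then have "(\<Sum>k<j. f k j) > 0" using j by simp
        have "n - j < d" using j d by auto
        moreover have "j \<le> n" using j by auto
        ultimately have "\<exists>S'. S' \<subseteq> {j..n} \<and> j \<in> S' \<and> n \<in> S' \<and> (\<forall>a b. cedge S' a b \<longrightarrow> f a b > 0)"
          using less[rule_format, of "n - j" j] \<open>(\<Sum>k<j. f k j) > 0\<close> by blast
        then obtain S' where S': "S' \<subseteq> {j..n}" "j \<in> S'" "n \<in> S'"
          "\<forall>a b. cedge S' a b \<longrightarrow> f a b > 0" by blast
        show ?thesis
        proof (intro exI[of _ "insert i S'"] conjI allI impI)
          show "insert i S' \<subseteq> {i..n}" using S' j i by auto
          show "i \<in> insert i S'" by simp
          show "n \<in> insert i S'" using S' by simp
          fix a b assume c: "cedge (insert i S') a b"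
          show "f a b > 0"
          proof (cases "a = i")
            case True
            have bS: "b \<in> S'" and ib: "i < b" and nb: "\<forall>k\<in>insert i S'. \<not> (i < k \<and> k < b)"
              using c True unfolding cedge_def by auto
            have "j \<le> b" using bS S' by auto
            moreover have "\<not> j < b" using nb S' j by auto
            ultimately have "b = j" by simp
            then show ?thesis using True j by simp
          next
            case False
            then have "cedge S' a b" using c S' j unfolding cedge_def by auto
            then show ?thesis using S' by blast
          qed
        qed
      qed
    qed
  qed
  obtain S where "S \<subseteq> {0..n}" "0 \<in> S" "n \<in> S" "\<forall>a b. cedge S a b \<longrightarrow> f a b > 0"
    using main[of "n - 0", rule_format, of 0] by auto
  then show ?thesis by (intro exI[of _ S]) auto
qed


lemma vertex_is_pflow:
  assumes N: "N = (\<lambda>i::nat. if i = 0 then t else if i = n then - t else 0)"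
    and n: "n \<ge> 1" and t: "t > 0" and fv: "f \<in> vertices (flow_polytope n N)"
  shows "\<exists>S. S \<subseteq> {..n} \<and> 0 \<in> S \<and> n \<in> S \<and> f = pflow t S"
proof -
  have f: "f \<in> flow_polytope n N" using fv unfolding vertices_def by auto
  obtain S where S: "S \<subseteq> {..n}" "0 \<in> S" "n \<in> S" and pos: "\<forall>a b. cedge S a b \<longrightarrow> f a b > 0"
    using path_exists[OF N n t f] by blast
  have finS: "finite S" using S finite_subset by blast
  define E where "E = {(a,b). cedge S a b}"
  have "E \<subseteq> {..n} \<times> {..n}" using S unfolding E_def cedge_def by auto
  then have finE: "finite E" by (rule finite_subset) auto
  obtain j0 where "cedge S 0 j0" using cedge_succ[OF finS S(2) S(3)] n by auto
  then have neE: "E \<noteq> {}" unfolding E_def by auto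
  define m where "m = Min ((\<lambda>(a,b). f a b) ` E)"
  have mpos: "m > 0"
    unfolding m_def using finE neE pos by (subst Min_gr_iff) (auto simp: E_def)
  have mle: "cedge S a b \<Longrightarrow> m \<le> f a b" for a b
    unfolding m_def using finE by (intro Min_le) (auto simp: E_def)
  define u where "u = min (1/2) (m / t)"
  have u: "0 < u" "u < 1" "u * t \<le> m" using mpos t unfolding u_def by (auto simp: min_def field_simps)
  define p where "p = pflow t S"
  have pin: "p \<in> flow_polytope n N" unfolding p_def using pflow_in[OF N n _ S] t by simp
  define g where "g = (\<lambda>a b. (f a b - u * p a b) / (1 - u))"
  have fpol: "\<And>i j. \<not> (i < j \<and> j \<le> n) \<Longrightarrow> f i j = 0" "\<And>i j. 0 \<le> f i j"
    "\<And>i. i \<le> n \<Longrightarrow> (\<Sum>j\<in>{i<..n}. f i j) - (\<Sum>k<i. f k i) = N i"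
    using f unfolding flow_polytope_def by auto
  have ppol: "\<And>i j. \<not> (i < j \<and> j \<le> n) \<Longrightarrow> p i j = 0"
    "\<And>i. i \<le> n \<Longrightarrow> (\<Sum>j\<in>{i<..n}. p i j) - (\<Sum>k<i. p k i) = N i"
    using pin unfolding flow_polytope_def by auto
  have gin: "g \<in> flow_polytope n N" unfolding flow_polytope_def
  proof (intro CollectI conjI allI impI)
    fix i j assume "\<not> (i < j \<and> j \<le> n)"
    then show "g i j = 0" unfolding g_def using fpol ppol by simp
  next
    fix i j
    have "u * p i j \<le> f i j"
    proof (cases "cedge S i j")
      case True
      then show ?thesis using mle[OF True] u unfolding p_def pflow_def by (simp add: mult.commute)
    next
      case False
      then show ?thesis using fpol unfolding p_def pflow_def by simp
    qed
    then show "0 \<le> g i j" unfolding g_def using u by simp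
  next
    fix i assume i: "i \<le> n"
    have "(\<Sum>j\<in>{i<..n}. g i j) - (\<Sum>k<i. g k i)
        = (((\<Sum>j\<in>{i<..n}. f i j) - (\<Sum>k<i. f k i)) - u * ((\<Sum>j\<in>{i<..n}. p i j) - (\<Sum>k<i. p k i))) / (1 - u)"
    proof -
      have sg: "sum h A = (sum h' A - u * sum h'' A) / (1 - u)"
        if "\<And>x. h x = (h' x - u * h'' x) / (1 - u)" for h h' h'' and A :: "nat set"
        using that by (simp add: sum_divide_distrib[symmetric] sum_subtractf sum_distrib_left)
      have u1: "1 - u \<noteq> 0" using u by simp
      show ?thesis
        apply (subst sg[where h'="f i" and h''="p i"], simp add: g_def)
        apply (subst sg[where h'="\<lambda>k. f k i" and h''="\<lambda>k. p k i"], simp add: g_def)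
        apply (simp only: diff_divide_distrib[symmetric])
        apply (rule arg_cong[where f="\<lambda>x. x / (1-u)"])
        by (simp add: algebra_simps)
    qed
    also have "\<dots> = (N i - u * N i) / (1 - u)" using fpol(3)[OF i] ppol(2)[OF i] by simp
    also have "\<dots> = N i" using u by (simp add: field_simps)
    finally show "(\<Sum>j\<in>{i<..n}. g i j) - (\<Sum>k<i. g k i) = N i" .
  qed
  have fdec: "f = (\<lambda>i j. u * p i j + (1 - u) * g i j)"
  proof (intro ext)
    fix i j
    have u1: "1 - u \<noteq> 0" using u by simp
    show "f i j = u * p i j + (1 - u) * g i j" unfolding g_def using u1 by simp
  qed
  have "p = g"
  proof (rule ccontr)
    assume "p \<noteq> g"
    then have "f \<notin> vertices (flow_polytope n N)"
      unfolding vertices_def using pin gin u fdec by blast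
    then show False using fv by simp
  qed
  have "f i j = p i j" for i j
  proof -
    have "f i j = u * p i j + (1 - u) * g i j" using fdec by metis
    also have "\<dots> = p i j" using \<open>p = g\<close> by (simp add: algebra_simps)
    finally show ?thesis .
  qed
  then have "f = p" by auto
  then show ?thesis using S p_def by blast
qed


lemma half_sum: "1 \<le> i \<Longrightarrow> (1/2::real)^i + (\<Sum>k\<in>{1..<i}. (1/2::real)^(i-k+1)) = 1/2"
proof (induction i rule: dec_induct)
  case base
  then show ?case by simp
next
  case (step i)
  have "(\<Sum>k\<in>{1..<Suc i}. (1/2::real)^(Suc i-k+1)) = (\<Sum>k\<in>{1..<i}. (1/2::real)^(Suc i-k+1)) + 1/4"
    using step by (simp add: sum.op_ivl_Suc power2_eq_square)
  also have "(\<Sum>k\<in>{1..<i}. (1/2::real)^(Suc i-k+1)) = (1/2) * (\<Sum>k\<in>{1..<i}. (1/2::real)^(i-k+1))"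
    unfolding sum_distrib_left by (rule sum.cong) (auto simp: Suc_diff_le)
  finally show ?case using step by simp
qed

lemma pow_div: "a \<le> b \<Longrightarrow> (2::real)^a / 2^b = (1/2)^(b-a)"
proof -
  assume "a \<le> b"
  then have "(2::real)^b = 2^a * 2^(b-a)" by (simp add: power_add[symmetric])
  then show ?thesis by (simp add: power_one_over)
qed

lemma pflow_inj:
  assumes t: "t > 0" and n: "n \<ge> 1"
    and S1: "S1 \<subseteq> {..n}" "0 \<in> S1" "n \<in> S1" and S2: "S2 \<subseteq> {..n}" "0 \<in> S2" "n \<in> S2"
    and eq: "pflow t S1 = pflow t S2"
  shows "S1 = S2"
proof -
  have char: "S = {k. k = n \<or> (\<exists>j. pflow t S k j \<noteq> 0)}" if S: "S \<subseteq> {..n}" "0 \<in> S" "n \<in> S" for S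
  proof -
    have fin: "finite S" using S finite_subset by blast
    have "k \<in> S \<longleftrightarrow> k = n \<or> (\<exists>j. cedge S k j)" for k
    proof
      assume k: "k \<in> S"
      show "k = n \<or> (\<exists>j. cedge S k j)"
      proof (cases "k = n")
        case False
        then have "k < n" using k S by auto
        then show ?thesis using cedge_succ[OF fin k S(3)] by auto
      qed simp
    next
      assume "k = n \<or> (\<exists>j. cedge S k j)"
      then show "k \<in> S" using S unfolding cedge_def by auto
    qed
    then show ?thesis unfolding pflow_def using t by auto
  qed
  show ?thesis using char[OF S1] char[OF S2] eq by simp
qed

lemma cedge_T:
  assumes T: "T \<subseteq> {1..<n}" and ij: "i < j" "j \<le> n"
  shows "cedge (insert 0 (insert n T)) i j \<longleftrightarrow> (i = 0 \<or> i \<in> T) \<and> (j = n \<or> j \<in> T) \<and> (\<forall>k\<in>T. \<not> (i < k \<and> k < j))"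
  using assms unfolding cedge_def by auto

lemma count_paths:
  assumes ij: "i < j" "j \<le> n"
  shows "card {T \<in> Pow {1..<n}. cedge (insert 0 (insert n T)) i j} = 2^((i-1) + (n - Suc j))"
proof -
  define F where "F = {1..<i} \<union> {Suc j..<n}"
  define h where "h = (\<lambda>R. R \<union> ({i,j} \<inter> {1..<n}))"
  have seteq: "{T \<in> Pow {1..<n}. cedge (insert 0 (insert n T)) i j} = h ` Pow F"
  proof (intro equalityI subsetI)
    fix T assume "T \<in> {T \<in> Pow {1..<n}. cedge (insert 0 (insert n T)) i j}"
    then have T: "T \<subseteq> {1..<n}" and c: "(i = 0 \<or> i \<in> T) \<and> (j = n \<or> j \<in> T) \<and> (\<forall>k\<in>T. \<not> (i < k \<and> k < j))"
      using cedge_T[OF _ ij] by auto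
    have "T - {i,j} \<subseteq> F" unfolding F_def using T c by fastforce
    moreover have "T = h (T - {i,j})" unfolding h_def using T c ij by auto
    ultimately show "T \<in> h ` Pow F" by blast
  next
    fix T assume "T \<in> h ` Pow F"
    then obtain R where R: "R \<subseteq> F" "T = h R" by blast
    have T: "T \<subseteq> {1..<n}" using R ij unfolding h_def F_def by auto
    have "(i = 0 \<or> i \<in> T) \<and> (j = n \<or> j \<in> T) \<and> (\<forall>k\<in>T. \<not> (i < k \<and> k < j))"
      using R ij unfolding h_def F_def by auto
    then show "T \<in> {T \<in> Pow {1..<n}. cedge (insert 0 (insert n T)) i j}"
      using cedge_T[OF T ij] T by auto
  qed
  have inj: "inj_on h (Pow F)"
  proof (rule inj_onI)
    fix R1 R2 assume "R1 \<in> Pow F" "R2 \<in> Pow F" "h R1 = h R2"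
    moreover have "R \<in> Pow F \<Longrightarrow> R = h R - {i,j}" for R unfolding h_def F_def using ij by auto
    ultimately show "R1 = R2" by metis
  qed
  have cF: "card F = (i-1) + (n - Suc j)"
    unfolding F_def using ij by (subst card_Un_disjoint) auto
  have "finite F" unfolding F_def by simp
  then show ?thesis unfolding seteq card_image[OF inj] using card_Pow cF by metis
qed


lemma sum_if_card: "finite A \<Longrightarrow> (\<Sum>x\<in>A. if P x then (c::real) else 0) = c * real (card {x\<in>A. P x})"
  by (simp add: sum.inter_filter[symmetric])

theorem proposition4p2:
  fixes n :: nat and t :: real
  assumes "n \<ge> 2" and "t > 0"
  defines "N \<equiv> (\<lambda>i::nat. if i = 0 then t else if i = n then - t else 0)"
  defines "f \<equiv> (\<lambda>i k::nat.
      if i = 0 \<and> k = n then t * (1/2) ^ (n - 1)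
      else if i = 0 \<and> 1 \<le> k \<and> k \<le> n - 1 then t * (1/2) ^ k
      else if 1 \<le> i \<and> i \<le> n - 1 \<and> k = n then t * (1/2) ^ (n - i)
      else if 1 \<le> i \<and> i < k \<and> k \<le> n - 1 then t * (1/2) ^ (k - i + 1)
      else (0::real))"
  defines "A \<equiv> (\<lambda>i j::nat.
      if i < n \<and> j < n then
        (if i = 0 \<and> j = 0 then (1/2) ^ (n - 1)
         else if i = 0 then (1/2) ^ (n - j)
         else if j = 0 then (1/2) ^ (n - i)
         else if i + j < n then (1/2) ^ (n - i - j + 1)
         else if i + j = n then 1/2
         else 0)
      else (0::real))"
  shows "finite (vertices (flow_polytope n N)) \<and> vertices (flow_polytope n N) \<noteq> {}
    \<and> uniform_average (vertices (flow_polytope n N)) = f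
    \<and> matrix_form n N f = (\<lambda>i j. t * A i j)"
proof -
  have n: "n \<ge> 1" using assms(1) by simp
  have t: "t > 0" by fact
  have Neq: "N = (\<lambda>i::nat. if i = 0 then t else if i = n then - t else 0)" by (simp add: N_def)
  define pf where "pf = (\<lambda>T. pflow t (insert 0 (insert n T)))"
  define V where "V = vertices (flow_polytope n N)"
  have Veq: "V = pf ` Pow {1..<n}"
  proof (intro equalityI subsetI)
    fix v assume "v \<in> V"
    then obtain S where S: "S \<subseteq> {..n}" "0 \<in> S" "n \<in> S" "v = pflow t S"
      using vertex_is_pflow[OF Neq n t] unfolding V_def by blast
    have "S = insert 0 (insert n (S \<inter> {1..<n}))"
    proof (intro equalityI subsetI)
      fix x assume x: "x \<in> S"
      then have "x \<le> n" using S by auto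
      then show "x \<in> insert 0 (insert n (S \<inter> {1..<n}))" using x by auto
    next
      fix x assume "x \<in> insert 0 (insert n (S \<inter> {1..<n}))"
      then show "x \<in> S" using S by auto
    qed
    then have "pflow t S = pflow t (insert 0 (insert n (S \<inter> {1..<n})))" by (rule arg_cong)
    then have "v = pf (S \<inter> {1..<n})" unfolding pf_def using S(4) by (simp only:)
    then show "v \<in> pf ` Pow {1..<n}" by (rule image_eqI) simp
  next
    fix v assume "v \<in> pf ` Pow {1..<n}"
    then obtain T where "T \<subseteq> {1..<n}" "v = pf T" by blast
    then show "v \<in> V" unfolding V_def pf_def by (simp only:) (rule pflow_vertex[OF Neq n t], auto)
  qed
  have inj: "inj_on pf (Pow {1..<n})"
  proof (rule inj_onI)
    fix T1 T2 assume T: "T1 \<in> Pow {1..<n}" "T2 \<in> Pow {1..<n}" "pf T1 = pf T2"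
    have e: "pflow t (insert 0 (insert n T1)) = pflow t (insert 0 (insert n T2))" using T(3) unfolding pf_def .
    have "insert 0 (insert n T1) = insert 0 (insert n T2)"
      by (rule pflow_inj[OF t n _ _ _ _ _ _ e]) (use T in auto)
    then have "insert 0 (insert n T1) \<inter> {1..<n} = insert 0 (insert n T2) \<inter> {1..<n}" by simp
    moreover have "insert 0 (insert n T) \<inter> {1..<n} = T" if "T \<subseteq> {1..<n}" for T using that by auto
    ultimately show "T1 = T2" using T by auto
  qed
  have finV: "finite V" unfolding Veq by simp
  have neV: "V \<noteq> {}" unfolding Veq using Pow_bottom[of "{1..<n}"] by blast
  have cardV: "card V = 2^(n-1)" unfolding Veq card_image[OF inj] by (simp add: card_Pow)
  have avg: "uniform_average V = f"
  proof (intro ext)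
    fix i j
    have "(\<Sum>v\<in>V. v i j) = (\<Sum>T\<in>Pow {1..<n}. pf T i j)"
      unfolding Veq by (subst sum.reindex[OF inj]) simp
    also have "\<dots> = t * real (card {T \<in> Pow {1..<n}. cedge (insert 0 (insert n T)) i j})"
      unfolding pf_def pflow_def by (rule sum_if_card) simp
    finally have s: "(\<Sum>v\<in>V. v i j) = t * real (card {T \<in> Pow {1..<n}. cedge (insert 0 (insert n T)) i j})" .
    show "uniform_average V i j = f i j"
    proof (cases "i < j \<and> j \<le> n")
      case False
      then have "{T \<in> Pow {1..<n}. cedge (insert 0 (insert n T)) i j} = {}"
        unfolding cedge_def by auto
      moreover have "f i j = 0" using False n unfolding f_def by auto
      ultimately show ?thesis unfolding uniform_average_def s by simp
    next
      case True
      then have ij: "i < j" "j \<le> n" by auto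
      have "uniform_average V i j = t * ((2::real)^((i-1) + (n - Suc j)) / 2^(n-1))"
        unfolding uniform_average_def s count_paths[OF ij] cardV by simp
      also have "\<dots> = t * (1/2)^((n-1) - ((i-1) + (n - Suc j)))"
        using ij by (subst pow_div) auto
      also have "\<dots> = f i j"
      proof -
        consider "i = 0" "j = n" | "i = 0" "j < n" | "i \<ge> 1" "j = n" | "i \<ge> 1" "j < n" using ij by linarith
        then show ?thesis
        proof cases
          case 1 then show ?thesis unfolding f_def by simp
        next
          case 2
          then have "(n-1) - ((i-1) + (n - Suc j)) = j" using ij by auto
          then show ?thesis unfolding f_def using 2 ij by auto
        next
          case 3
          then have "(n-1) - ((i-1) + (n - Suc j)) = n - i" using ij by auto
          then show ?thesis unfolding f_def using 3 ij by auto
        next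
          case 4
          then have "(n-1) - ((i-1) + (n - Suc j)) = j - i + 1" using ij by auto
          then show ?thesis unfolding f_def using 4 ij by auto
        qed
      qed
      finally show ?thesis .
    qed
  qed
  have colsum: "(\<Sum>k<i. N k - f k i) = t / 2" if i: "1 \<le> i" "i \<le> n - 1" for i
  proof -
    have sp: "{..<i} = insert 0 {1..<i}" using i by auto
    have "(\<Sum>k<i. N k - f k i) = (N 0 - f 0 i) + (\<Sum>k\<in>{1..<i}. N k - f k i)"
      unfolding sp by (subst sum.insert) auto
    also have "(\<Sum>k\<in>{1..<i}. N k - f k i) = (\<Sum>k\<in>{1..<i}. - (t * (1/2)^(i-k+1)))"
      by (rule sum.cong) (use i in \<open>auto simp: N_def f_def\<close>)
    also have "N 0 - f 0 i = t - t * (1/2)^i" using i n unfolding N_def f_def by auto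
    finally have "(\<Sum>k<i. N k - f k i) = t - t * ((1/2)^i + (\<Sum>k\<in>{1..<i}. (1/2::real)^(i-k+1)))"
      by (simp add: sum_negf sum_distrib_left algebra_simps)
    then show ?thesis using half_sum[OF i(1)] by simp
  qed
  have mat: "matrix_form n N f = (\<lambda>i j. t * A i j)"
  proof (intro ext)
    fix i j
    show "matrix_form n N f i j = t * A i j"
    proof (cases "i < n \<and> j < n \<and> i + j \<le> n - 1")
      case True
      then show ?thesis unfolding matrix_form_def A_def f_def using n
        by (auto simp: algebra_simps)
    next
      case False
      show ?thesis
      proof (cases "1 \<le> i \<and> i \<le> n - 1 \<and> j = n - i")
        case True
        then show ?thesis unfolding matrix_form_def using False colsum[of i] unfolding A_def by auto
      next
        case F2: False
        then show ?thesis unfolding matrix_form_def A_def using False by auto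
      qed
    qed
  qed
  show ?thesis using finV neV avg mat unfolding V_def by blast
qed

end
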